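(* Let $\mathbf P\subset\mathbb Z^n$ be finite with $P=\operatorname{Conv}\mathbf P$, and let $D$ be a daughter polytope of $\mathbf P$ with associated set $\mathcal D=\mathcal D(D)$. Let $W\in\mathcal D$ and let $S$ be a face of $P$ with $S\subset W$. Then for every $W'\in\mathcal D\setminus\{W\}$, the projection $\pi_S(W')$ does not intersect $\mathbf P_S$.
   Context: **Quotient projection.** $\pi_S:\mathbb R^n\to\mathbb R^n/\operatorname{aff}(S)$ sends $\operatorname{aff}(S)$ to the origin. **Daughter polytope.** For a nonempty polytope $D$ with vertices in $\mathbf P$, $\mathcal D(D)$ is the set of inclusion-maximal faces $F$ of $P$ with $D\cap F=\emptyset$. $D$ is a daughter polytope of $\mathbf P$ if: 1. distinct faces in $\mathcal D(D)$ are pairwise disjoint; 2. $D=\operatorname{Conv}(\mathbf P\setminus\bigcup_{F\in\mathcal D(D)}F)$. **The set $\mathbf P_S$.** For a face $S$ of $P$: $$\mathbf P_S=\pi_S(\mathbf P)\cap\overline{\pi_S(P)\setminus\pi_S(\operatorname{Conv}(\mathbf P\setminus S))},$$ where the overline denotes topological closure. *)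

theory Defs
  imports "HOL-Analysis.Analysis"
begin

text \<open>Quotient projection by aff(S), realised concretely as the orthogonal projection
  onto the orthogonal complement of the direction space of aff(S), after translating
  a point of S to the origin (this is a linear isomorphism of the quotient space
  R^n / aff(S) onto a closed subspace of R^n, so images, intersections and
  closures are faithfully represented). For S = {} the map is the identity.\<close>
definition quot_proj :: "(real^'n) set \<Rightarrow> real^'n \<Rightarrow> real^'n" where
  "quot_proj S x =
     closest_point (orthogonal_comp (span {a - b | a b. a \<in> S \<and> b \<in> S}))
       (x - (if S = {} then 0 else (SOME s. s \<in> S)))"

definition daughter_faces :: "(real^'n) set \<Rightarrow> (real^'n) set \<Rightarrow> (real^'n) set set" where
  "daughter_faces PP D =
     {F. F face_of convex hull PP \<and> D \<inter> F = {} \<and>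
         (\<forall>G. G face_of convex hull PP \<and> D \<inter> G = {} \<and> F \<subseteq> G \<longrightarrow> G = F)}"

definition is_daughter :: "(real^'n) set \<Rightarrow> (real^'n) set \<Rightarrow> bool" where
  "is_daughter PP D \<longleftrightarrow>
     polytope D \<and> D \<noteq> {} \<and> {v. v extreme_point_of D} \<subseteq> PP \<and>
     pairwise disjnt (daughter_faces PP D) \<and>
     D = convex hull (PP - \<Union>(daughter_faces PP D))"

definition PP_face :: "(real^'n) set \<Rightarrow> (real^'n) set \<Rightarrow> (real^'n) set" where
  "PP_face PP S =
     quot_proj S ` PP \<inter>
     closure (quot_proj S ` (convex hull PP) - quot_proj S ` (convex hull (PP - S)))"

end

theory Submission
  imports Defs
begin

lemma sq_add: "(u + w) \<bullet> (u + w) = u \<bullet> u + 2 * (u \<bullet> w) + w \<bullet> (w::'a::real_inner)"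
  by (simp add: inner_add_left inner_add_right inner_commute)

lemma cp_char:
  fixes V :: "'a::euclidean_space set"
  assumes V: "subspace V" and p: "p \<in> V" and o: "\<forall>v\<in>V. (a - p) \<bullet> v = 0"
  shows "closest_point V a = p"
proof -
  have "\<forall>z\<in>V. dist a p \<le> dist a z"
  proof
    fix z assume z: "z \<in> V"
    have "p - z \<in> V" using V p z by (simp add: subspace_diff)
    then have 0: "(a - p) \<bullet> (p - z) = 0" using o by blast
    have "(a - z) \<bullet> (a - z) = ((a - p) + (p - z)) \<bullet> ((a - p) + (p - z))" by simp
    also have "\<dots> = (a - p) \<bullet> (a - p) + 2 * ((a - p) \<bullet> (p - z)) + (p - z) \<bullet> (p - z)"
      by (rule sq_add)
    finally have "(a - z) \<bullet> (a - z) = (a - p) \<bullet> (a - p) + (p - z) \<bullet> (p - z)"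
      using 0 by simp
    then have "(a - p) \<bullet> (a - p) \<le> (a - z) \<bullet> (a - z)" by simp
    then show "dist a p \<le> dist a z" by (simp add: dist_norm norm_le)
  qed
  then show ?thesis
    using closest_point_unique[of V p a] V p
    by (simp add: closed_subspace subspace_imp_convex)
qed

lemma cp_in:
  fixes V :: "'a::euclidean_space set"
  assumes V: "subspace V"
  shows "closest_point V a \<in> V"
  using closest_point_in_set[of V a] V closed_subspace subspace_0 by blast

lemma cp_orth:
  fixes V :: "'a::euclidean_space set"
  assumes V: "subspace V" and v: "v \<in> V"
  shows "(a - closest_point V a) \<bullet> v = 0"
proof -
  let ?p = "closest_point V a"
  have p: "?p \<in> V" using cp_in V by blast
  have c: "convex V" "closed V" using V by (auto simp: closed_subspace subspace_imp_convex)
  have "?p + v \<in> V" "?p - v \<in> V" using V p v by (auto simp: subspace_add subspace_diff)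
  then have "(a - ?p) \<bullet> ((?p + v) - ?p) \<le> 0" "(a - ?p) \<bullet> ((?p - v) - ?p) \<le> 0"
    using closest_point_dot[OF c] by blast+
  then show ?thesis by (simp add: inner_diff_right)
qed

lemma cp_linear:
  fixes V :: "'a::euclidean_space set"
  assumes V: "subspace V"
  shows "linear (closest_point V)"
proof (rule linearI)
  fix x y
  show "closest_point V (x + y) = closest_point V x + closest_point V y"
  proof (rule cp_char[OF V])
    show "closest_point V x + closest_point V y \<in> V" using V cp_in subspace_add by blast
    show "\<forall>v\<in>V. (x + y - (closest_point V x + closest_point V y)) \<bullet> v = 0"
    proof
      fix v assume "v \<in> V"
      then have "(x - closest_point V x) \<bullet> v = 0" "(y - closest_point V y) \<bullet> v = 0"
        using cp_orth V by blast+
      then show "(x + y - (closest_point V x + closest_point V y)) \<bullet> v = 0"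
        by (simp add: inner_diff_left inner_add_left)
    qed
  qed
next
  fix c :: real and x
  show "closest_point V (c *\<^sub>R x) = c *\<^sub>R closest_point V x"
  proof (rule cp_char[OF V])
    show "c *\<^sub>R closest_point V x \<in> V" using V cp_in subspace_scale by blast
    show "\<forall>v\<in>V. (c *\<^sub>R x - c *\<^sub>R closest_point V x) \<bullet> v = 0"
    proof
      fix v assume "v \<in> V"
      then have "(x - closest_point V x) \<bullet> v = 0" using cp_orth V by blast
      then show "(c *\<^sub>R x - c *\<^sub>R closest_point V x) \<bullet> v = 0"
        by (metis inner_scaleR_left mult_zero_right scaleR_right_diff_distrib)
    qed
  qed
qed

lemma cp_adj:
  fixes V :: "'a::euclidean_space set"
  assumes V: "subspace V"
  shows "a \<bullet> closest_point V x = closest_point V a \<bullet> x"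
proof -
  have 1: "(a - closest_point V a) \<bullet> closest_point V x = 0" using cp_orth cp_in V by blast
  have 2: "(x - closest_point V x) \<bullet> closest_point V a = 0" using cp_orth cp_in V by blast
  have "a \<bullet> closest_point V x = closest_point V a \<bullet> closest_point V x"
    using 1 by (simp add: inner_diff_left)
  also have "\<dots> = closest_point V a \<bullet> x"
  proof -
    have "closest_point V a \<bullet> x - closest_point V a \<bullet> closest_point V x = 0"
      using 2 by (simp add: inner_diff_left inner_diff_right inner_commute)
    then show ?thesis by simp
  qed
  finally show ?thesis .
qed


lemma hull_affine_img:
  fixes f :: "'a::real_vector \<Rightarrow> 'b::real_vector"
  assumes "linear f"
  shows "(\<lambda>x. f x - c) ` (convex hull A) = convex hull ((\<lambda>x. f x - c) ` A)"
proof -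
  have e: "\<And>B. (\<lambda>x. f x - c) ` B = (\<lambda>y. (- c) + y) ` (f ` B)" by (auto simp: image_image)
  show ?thesis
    unfolding e convex_hull_translation convex_hull_linear_image[OF assms] ..
qed

theorem lemma4p2:
  fixes PP D W W' S :: "(real^'n) set"
  assumes "finite PP"
    and "\<forall>x\<in>PP. \<forall>i. x $ i \<in> \<int>"
    and "is_daughter PP D"
    and "W \<in> daughter_faces PP D"
    and "S face_of convex hull PP"
    and "S \<subseteq> W"
    and "W' \<in> daughter_faces PP D - {W}"
  shows "quot_proj S ` W' \<inter> PP_face PP S = {}"
proof (cases "S = {}")
  case True
  have id: "quot_proj S x = x" for x
    unfolding quot_proj_def True by (simp add: closest_point_self)
  show ?thesis unfolding PP_face_def id True by simp
next
  case Sne: False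
  define P where "P = convex hull PP"
  define Sp where "Sp = span {a - b | a b. a \<in> S \<and> b \<in> S}"
  define V where "V = orthogonal_comp Sp"
  have V: "subspace V" unfolding V_def by (rule subspace_orthogonal_comp)
  define Pr where "Pr = closest_point V"
  have linPr: "linear Pr" unfolding Pr_def using cp_linear[OF V] .
  define s0 where "s0 = (SOME s. s \<in> S)"
  have s0: "s0 \<in> S" unfolding s0_def using Sne by (simp add: some_in_eq)
  define \<pi> where "\<pi> = quot_proj S"
  have pi: "\<pi> x = Pr x - Pr s0" for x
    unfolding \<pi>_def quot_proj_def Pr_def[symmetric] V_def[symmetric] Sp_def[symmetric] s0_def[symmetric]
    using Sne linear_diff[OF linPr] by simp
  have piS: "\<pi> s = 0" if "s \<in> S" for s
  proof -
    have "Pr (s - s0) = 0" unfolding Pr_def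
    proof (rule cp_char[OF V])
      show "0 \<in> V" using V subspace_0 by blast
      have "s - s0 \<in> Sp" unfolding Sp_def using that s0 by (intro span_base) blast
      then show "\<forall>v\<in>V. (s - s0 - 0) \<bullet> v = 0"
        unfolding V_def orthogonal_comp_def orthogonal_def by simp
    qed
    then show ?thesis unfolding pi using linear_diff[OF linPr] by simp
  qed
  have piimg: "\<pi> ` (convex hull A) = convex hull (\<pi> ` A)" for A
  proof -
    have "\<pi> = (\<lambda>x. Pr x - Pr s0)" using pi by blast
    then show ?thesis using hull_affine_img[OF linPr] by simp
  qed
  from assms(3) have Ddef: "D = convex hull (PP - \<Union>(daughter_faces PP D))"
    and pw: "pairwise disjnt (daughter_faces PP D)"
    unfolding is_daughter_def by auto
  have W'D: "W' \<in> daughter_faces PP D" and WW': "W' \<noteq> W" using assms(7) by auto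
  have "disjnt W W'" using pw assms(4) W'D WW' unfolding pairwise_def by auto
  then have SW': "S \<inter> W' = {}" using assms(6) unfolding disjnt_def by blast
  have W'face: "W' face_of P" using W'D unfolding daughter_faces_def P_def by blast
  have Sface: "S face_of P" using assms(5) unfolding P_def .
  have cPP: "compact PP" using assms(1) by (simp add: finite_imp_compact)
  define Q where "Q = convex hull (PP - S)"
  have W'Q: "W' \<subseteq> Q"
  proof -
    obtain S' where S': "S' \<subseteq> PP" "W' = convex hull S'"
      using face_of_convex_hull_subset[OF cPP W'face[unfolded P_def]] by blast
    then have "S' \<subseteq> W'" by (simp add: hull_subset)
    then have "S' \<subseteq> PP - S" using S' SW' by blast
    then show ?thesis unfolding Q_def S' by (rule hull_mono)
  qed
  show ?thesis
  proof (rule ccontr)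
    assume "\<not> ?thesis"
    then obtain z where z1: "z \<in> \<pi> ` W'" and z2: "z \<in> PP_face PP S"
      unfolding \<pi>_def by blast
    obtain w' where w': "w' \<in> W'" "z = \<pi> w'" using z1 by blast
    define K where "K = \<pi> ` Q"
    have zcl: "z \<in> closure (\<pi> ` P - K)"
      using z2 unfolding PP_face_def K_def Q_def P_def \<pi>_def by blast
    have zK: "z \<in> K" unfolding K_def using w' W'Q by blast
    have "polytope K" unfolding K_def Q_def piimg polytope_def
      by (rule exI[of _ "\<pi> ` (PP - S)"]) (use assms(1) in auto)
    then have "polyhedron K" by (rule polytope_imp_polyhedron)
    then obtain F where F: "finite F" "K = \<Inter>F" "\<forall>h\<in>F. \<exists>a b. a \<noteq> 0 \<and> h = {x. a \<bullet> x \<le> b}"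
      unfolding polyhedron_def by blast
    have "\<exists>a b. K \<subseteq> {x. a \<bullet> x \<le> b} \<and> a \<bullet> z = b \<and> b < 0"
    proof (rule ccontr)
      assume H: "\<not> ?thesis"
      define U where "U = \<Inter>(interior ` {h\<in>F. z \<in> interior h})"
      have oU: "open U" unfolding U_def using F(1) by (intro open_Inter) auto
      have zU: "z \<in> U" unfolding U_def by blast
      have "U \<inter> (\<pi> ` P - K) = {}"
      proof -
        have "u \<in> K" if u: "u \<in> U" "u \<in> \<pi> ` P" for u
        proof -
          have "u \<in> h" if h: "h \<in> F" for h
          proof (cases "z \<in> interior h")
            case True
            then have "u \<in> interior h" using u h unfolding U_def by blast
            then show ?thesis using interior_subset by blast
          next
            case False
            obtain a b where ab: "a \<noteq> 0" "h = {x. a \<bullet> x \<le> b}" using F(3) h by blast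
            have Kh: "K \<subseteq> h" using F(2) h by blast
            then have "a \<bullet> z \<le> b" using zK ab by blast
            moreover have "\<not> a \<bullet> z < b" using False ab by simp
            ultimately have azb: "a \<bullet> z = b" by simp
            have b0: "b \<ge> 0" using H Kh ab azb by force
            have "\<pi> ` PP \<subseteq> h"
            proof
              fix v assume "v \<in> \<pi> ` PP"
              then obtain q where q: "q \<in> PP" "v = \<pi> q" by blast
              show "v \<in> h"
              proof (cases "q \<in> S")
                case True
                then show ?thesis using q piS b0 ab by simp
              next
                case False
                then have "q \<in> Q" unfolding Q_def using q by (simp add: hull_inc)
                then show ?thesis using q Kh unfolding K_def by blast
              qed
            qed
            then have "convex hull (\<pi> ` PP) \<subseteq> h"
              using ab by (simp add: convex_halfspace_le hull_minimal)
            then show ?thesis using u unfolding P_def piimg by blast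
          qed
          then show ?thesis using F(2) by blast
        qed
        then show ?thesis by blast
      qed
      then have "U \<inter> closure (\<pi> ` P - K) = {}" using oU open_Int_closure_eq_empty by blast
      then show False using zU zcl by blast
    qed
    then obtain a b where ab: "K \<subseteq> {x. a \<bullet> x \<le> b}" "a \<bullet> z = b" "b < 0" by blast
    define r where "r = Pr a"
    define r0 where "r0 = a \<bullet> Pr s0"
    have api: "a \<bullet> \<pi> x = r \<bullet> x - r0" for x
      unfolding pi r_def r0_def Pr_def using cp_adj[OF V] by (simp add: inner_diff_right)
    have rS: "r \<bullet> s - r0 = 0" if "s \<in> S" for s using api[of s] piS[OF that] by simp
    have rQ: "r \<bullet> q - r0 \<le> b" if "q \<in> Q" for q
      using api[of q] ab(1) that unfolding K_def by force
    have rw: "r \<bullet> w' - r0 = b" using api[of w'] ab(2) w' by simp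
    have polyP: "polytope P" unfolding P_def polytope_def
      by (rule exI[of _ PP]) (use assms(1) in auto)
    have "W' exposed_face_of P"
      using exposed_face_of_polyhedron[OF polytope_imp_polyhedron[OF polyP]] W'face by blast
    then obtain c M where cM: "P \<subseteq> {x. c \<bullet> x \<le> M}" "W' = P \<inter> {x. c \<bullet> x = M}"
      unfolding exposed_face_of_def by blast
    have cP: "compact P" unfolding P_def using cPP by (simp add: compact_convex_hull)
    have cvP: "convex P" unfolding P_def by simp
    have cS: "compact S" using face_of_imp_compact[OF cvP cP Sface] .
    have "continuous_on S (\<lambda>x. c \<bullet> x)" by (intro continuous_intros)
    then obtain ss where ss: "ss \<in> S" "\<forall>s\<in>S. c \<bullet> s \<le> c \<bullet> ss"
      using continuous_attains_sup[OF cS Sne] by blast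
    have SP: "S \<subseteq> P" using Sface face_of_imp_subset by blast
    define m where "m = c \<bullet> ss"
    have "ss \<notin> W'" using ss SW' by blast
    then have mM: "m < M" using cM ss SP unfolding m_def by force
    define lm where "lm = M - m"
    have lam: "lm > 0" using mM unfolding lm_def by simp
    define d where "d = c - (lm / b) *\<^sub>R r"
    define T where "T = m - lm * r0 / b"
    have dx: "d \<bullet> x - T = c \<bullet> x - lm * ((r \<bullet> x - r0) / b) - m" for x
      unfolding d_def T_def using ab(3) by (simp add: inner_diff_left field_simps)
    have PPle: "d \<bullet> q \<le> T" if "q \<in> PP" for q
    proof (cases "q \<in> S")
      case True
      then show ?thesis using dx[of q] rS ss unfolding m_def by fastforce
    next
      case False
      then have "q \<in> Q" unfolding Q_def using that by (simp add: hull_inc)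
      then have "r \<bullet> q - r0 \<le> b" by (rule rQ)
      then have g: "(r \<bullet> q - r0) / b \<ge> 1" using ab(3) by (simp add: le_divide_eq)
      have "q \<in> P" unfolding P_def using that by (simp add: hull_inc)
      then have "c \<bullet> q \<le> M" using cM by blast
      then have "c \<bullet> q - lm * ((r \<bullet> q - r0) / b) \<le> M - lm"
        using g lam by (smt (verit) mult_le_cancel_left1)
      then show ?thesis using dx[of q] unfolding lm_def by simp
    qed
    have PPlt: "d \<bullet> q < T" if "q \<in> PP" "q \<notin> S" "q \<notin> W'" for q
    proof -
      have "q \<in> Q" unfolding Q_def using that by (simp add: hull_inc)
      then have "r \<bullet> q - r0 \<le> b" by (rule rQ)
      then have g: "(r \<bullet> q - r0) / b \<ge> 1" using ab(3) by (simp add: le_divide_eq)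
      have "q \<in> P" unfolding P_def using that by (simp add: hull_inc)
      then have "c \<bullet> q < M" using cM that(3) by force
      then have "c \<bullet> q - lm * ((r \<bullet> q - r0) / b) < M - lm"
        using g lam by (smt (verit) mult_le_cancel_left1)
      then show ?thesis using dx[of q] unfolding lm_def by simp
    qed
    have Ple: "\<And>x. x \<in> P \<Longrightarrow> d \<bullet> x \<le> T"
    proof -
      have "P \<subseteq> {x. d \<bullet> x \<le> T}" unfolding P_def
        using PPle by (intro hull_minimal) (auto simp: convex_halfspace_le)
      then show "\<And>x. x \<in> P \<Longrightarrow> d \<bullet> x \<le> T" by blast
    qed
    define G where "G = P \<inter> {x. d \<bullet> x = T}"
    have Gface: "G face_of P" unfolding G_def using cvP Ple by (rule face_of_Int_supporting_hyperplane_le)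
    have "W \<subseteq> \<Union>(daughter_faces PP D)" "W' \<subseteq> \<Union>(daughter_faces PP D)"
      using assms(4) W'D by auto
    then have "PP - \<Union>(daughter_faces PP D) \<subseteq> {x. d \<bullet> x < T}"
      using PPlt assms(6) by blast
    then have "convex hull (PP - \<Union>(daughter_faces PP D)) \<subseteq> {x. d \<bullet> x < T}"
      by (intro hull_minimal) (auto simp: convex_halfspace_lt)
    then have "D \<subseteq> {x. d \<bullet> x < T}" by (rule ord_eq_le_trans[OF Ddef])
    then have DG: "D \<inter> G = {}" unfolding G_def by auto
    have w'G: "w' \<in> G"
    proof -
      have "w' \<in> P" "c \<bullet> w' = M" using w'(1) cM by auto
      then show ?thesis unfolding G_def using dx[of w'] rw ab(3) unfolding lm_def by simp
    qed
    have ssG: "ss \<in> G"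
      unfolding G_def using dx[of ss] rS[OF ss(1)] SP ss(1) unfolding m_def by auto
    define X where "X = {F. F face_of P \<and> D \<inter> F = {} \<and> G \<subseteq> F}"
    have "finite X" unfolding X_def
      using finite_polytope_faces[OF polyP] by (rule rev_finite_subset) blast
    moreover have "G \<in> X" unfolding X_def using Gface DG by blast
    ultimately obtain F0 where F0: "F0 \<in> X" "G \<subseteq> F0" "\<forall>B\<in>X. F0 \<subseteq> B \<longrightarrow> F0 = B"
      using finite_has_maximal2[of X G] by blast
    have F0D: "F0 \<in> daughter_faces PP D"
      unfolding daughter_faces_def P_def[symmetric] using F0 unfolding X_def by blast
    have "F0 = W"
    proof (rule ccontr)
      assume "F0 \<noteq> W"
      then have "disjnt F0 W" using pw F0D assms(4) unfolding pairwise_def by blast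
      then show False using ssG F0(2) ss(1) assms(6) unfolding disjnt_def by blast
    qed
    moreover have "F0 = W'"
    proof (rule ccontr)
      assume "F0 \<noteq> W'"
      then have "disjnt F0 W'" using pw F0D W'D unfolding pairwise_def by blast
      then show False using w'G F0(2) w'(1) unfolding disjnt_def by blast
    qed
    ultimately show False using WW' by simp
  qed
qed

end
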